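(* If there exists an ${}^\alpha\mathrm{H}_t(m,n;s,k)$, then for every positive divisor $\lambda$ of $t$ there exists a ${}^{\lambda\alpha}\mathrm{H}_{t/\lambda}(m,n;s,k)$. More precisely, if $A$ is an ${}^\alpha\mathrm{H}_t(m,n;s,k)$ over $\mathbb{Z}_v$ with $v=\frac{2nk}{\alpha}+t$, then the array obtained from $A$ by reducing every entry modulo $\frac{v}{\lambda}$ (i.e. applying the natural projection $\mathbb{Z}_v\to\mathbb{Z}_{v/\lambda}$) is a ${}^{\lambda\alpha}\mathrm{H}_{t/\lambda}(m,n;s,k)$ over $\mathbb{Z}_{v/\lambda}$.
   Context: For positive integers $m,n,s,k,\lambda,t$ with $t$ dividing $\frac{2nk}{\lambda}$, let $v=\frac{2nk}{\lambda}+t$ and $J$ the subgroup of $\mathbb{Z}_v$ of order $t$. A $\lambda$-fold Heffter array over $\mathbb{Z}_v$ relative to $J$, denoted ${}^\lambda\mathrm{H}_t(m,n;s,k)$, is an $m\times n$ partially filled array with entries in $\mathbb{Z}_v$ such that: (a) each row has exactly $s$ and each column exactly $k$ filled cells; (b) the multiset $\{\pm x: x$ an entry of a filled cell$\}$ (counted over all filled cells) contains each element of $\mathbb{Z}_v\setminus J$ exactly $\lambda$ times and no element of $J$; (c) every row and every column sums to $0$ in $\mathbb{Z}_v$. (When $\lambda=1$ this is a relative Heffter array $\mathrm{H}_t(m,n;s,k)$.) *)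

theory Defs
  imports Main
begin

text \<open>A partially filled m x n array with entries in Z_v is modelled as
  A :: nat => nat => int option; A i j = None means cell (i,j) is empty,
  A i j = Some a means it holds the residue class of a, where a is the
  canonical representative in {0..<v}.\<close>

definition heffter_order :: "nat \<Rightarrow> nat \<Rightarrow> nat \<Rightarrow> nat \<Rightarrow> nat" where
  "heffter_order lam t n k = 2 * n * k div lam + t"

definition pm_count :: "(nat \<Rightarrow> nat \<Rightarrow> int option) \<Rightarrow> nat \<Rightarrow> nat \<Rightarrow> int \<Rightarrow> int \<Rightarrow> nat" where
  "pm_count A m n v x =
     card {(i, j). i < m \<and> j < n \<and> (\<exists>a. A i j = Some a \<and> a mod v = x mod v)}
   + card {(i, j). i < m \<and> j < n \<and> (\<exists>a. A i j = Some a \<and> (- a) mod v = x mod v)}"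

text \<open>The subgroup J of Z_v of order t (t dividing v) is the set of multiples of v/t.\<close>
definition lambda_fold_heffter ::
  "nat \<Rightarrow> nat \<Rightarrow> nat \<Rightarrow> nat \<Rightarrow> nat \<Rightarrow> nat \<Rightarrow> (nat \<Rightarrow> nat \<Rightarrow> int option) \<Rightarrow> bool" where
  "lambda_fold_heffter lam t m n s k A \<longleftrightarrow>
     (let v = heffter_order lam t n k in
      0 < m \<and> 0 < n \<and> 0 < s \<and> 0 < k \<and> 0 < lam \<and> 0 < t \<and>
      lam dvd 2 * n * k \<and> t dvd (2 * n * k div lam) \<and>
      (\<forall>i j. (i \<ge> m \<or> j \<ge> n) \<longrightarrow> A i j = None) \<and>
      (\<forall>i j a. A i j = Some a \<longrightarrow> 0 \<le> a \<and> a < int v) \<and>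
      (\<forall>i<m. card {j. j < n \<and> A i j \<noteq> None} = s) \<and>
      (\<forall>j<n. card {i. i < m \<and> A i j \<noteq> None} = k) \<and>
      (\<forall>x::int. 0 \<le> x \<and> x < int v \<longrightarrow>
          pm_count A m n (int v) x = (if int (v div t) dvd x then 0 else lam)) \<and>
      (\<forall>i<m. (\<Sum>j\<in>{j. j < n \<and> A i j \<noteq> None}. the (A i j)) mod int v = 0) \<and>
      (\<forall>j<n. (\<Sum>i\<in>{i. i < m \<and> A i j \<noteq> None}. the (A i j)) mod int v = 0))"

end

theory Submission
  imports Defs
begin

lemma count_split:
  fixes f :: "'c \<Rightarrow> int" and w :: int
  assumes fin: "finite C" and lp: "0 < lam" and w: "0 < w" and v: "v = int lam * w" and x: "0 \<le> x" "x < w"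
  shows "card {c\<in>C. f c mod w = x} = (\<Sum>j<lam. card {c\<in>C. f c mod v = x + int j * w})"
proof -
  have wv: "w dvd v" using v by simp
  have eq: "{c\<in>C. f c mod w = x} = (\<Union>j<lam. {c\<in>C. f c mod v = x + int j * w})"
  proof (rule set_eqI, rule iffI)
    fix c assume c: "c \<in> {c\<in>C. f c mod w = x}"
    define y where "y = f c mod v"
    have vpos: "0 < v" using v w lp by simp
    have y0: "0 \<le> y" "y < v" using vpos unfolding y_def by auto
    have ymw: "y mod w = x" using c unfolding y_def by (simp add: mod_mod_cancel[OF wv])
    define j where "j = nat (y div w)"
    have yd: "y = x + int j * w" using ymw y0 w unfolding j_def
      by (metis mult.commute div_mult_mod_eq add.commute pos_imp_zdiv_nonneg_iff nat_0_le)
    have "y div w * w \<le> y" proof -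
      have "y = y div w * w + y mod w" by simp
      moreover have "0 \<le> y mod w" using w by simp
      ultimately show ?thesis by linarith
    qed
    then have "y div w * w < int lam * w" using y0 v by simp
    then have "y div w < int lam" using w by (simp add: mult_less_cancel_right)
    then have "j < lam" unfolding j_def using y0 w by (simp add: nat_less_iff pos_imp_zdiv_nonneg_iff)
    then show "c \<in> (\<Union>j<lam. {c\<in>C. f c mod v = x + int j * w})"
      using c yd unfolding y_def by auto
  next
    fix c assume "c \<in> (\<Union>j<lam. {c\<in>C. f c mod v = x + int j * w})"
    then obtain j where "c \<in> C" "f c mod v = x + int j * w" by auto
    then have "(f c mod v) mod w = x" using x by simp
    then show "c \<in> {c\<in>C. f c mod w = x}" using \<open>c \<in> C\<close> by (simp add: mod_mod_cancel[OF wv])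
  qed
  have "card (\<Union>j<lam. {c\<in>C. f c mod v = x + int j * w}) = (\<Sum>j<lam. card {c\<in>C. f c mod v = x + int j * w})"
    by (rule card_UN_disjoint) (use fin w in auto)
  then show ?thesis using eq by simp
qed

theorem theorem4p4:
  fixes alpha t m n s k lam :: nat and A :: "nat \<Rightarrow> nat \<Rightarrow> int option"
  assumes "lambda_fold_heffter alpha t m n s k A"
    and "0 < lam" and "lam dvd t"
  shows "lambda_fold_heffter (lam * alpha) (t div lam) m n s k
           (\<lambda>i j. map_option (\<lambda>a. a mod int (heffter_order alpha t n k div lam)) (A i j))"
proof -
  define V where "V = heffter_order alpha t n k"
  define W where "W = V div lam"
  define A' where "A' = (\<lambda>i j. map_option (\<lambda>a. a mod int W) (A i j))"
  note H = assms(1)[unfolded lambda_fold_heffter_def Let_def, folded V_def]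
  have pos: "0 < m" "0 < n" "0 < s" "0 < k" "0 < alpha" "0 < t" using H by auto
  have ad: "alpha dvd 2*n*k" and td: "t dvd 2*n*k div alpha" using H by auto
  have none: "\<forall>i j. (i \<ge> m \<or> j \<ge> n) \<longrightarrow> A i j = None" using H by blast
  have rng: "\<forall>i j a. A i j = Some a \<longrightarrow> 0 \<le> a \<and> a < int V" using H by blast
  have rows: "\<forall>i<m. card {j. j < n \<and> A i j \<noteq> None} = s" using H by blast
  have cols: "\<forall>j<n. card {i. i < m \<and> A i j \<noteq> None} = k" using H by blast
  have pm: "\<forall>x::int. 0 \<le> x \<and> x < int V \<longrightarrow>
          pm_count A m n (int V) x = (if int (V div t) dvd x then 0 else alpha)" using H by blast
  have rs: "\<forall>i<m. (\<Sum>j\<in>{j. j < n \<and> A i j \<noteq> None}. the (A i j)) mod int V = 0" using H by blast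
  have cs: "\<forall>j<n. (\<Sum>i\<in>{i. i < m \<and> A i j \<noteq> None}. the (A i j)) mod int V = 0" using H by blast
  obtain q where q: "2*n*k div alpha = t * q" using td by blast
  obtain r where r: "t = lam * r" using assms(3) by blast
  have rpos: "0 < r" using r pos by simp
  have Vq: "V = lam * r * (q+1)" unfolding V_def heffter_order_def using q r by simp
  have Wq: "W = r * (q+1)" unfolding W_def using Vq assms(2) by simp
  have VW: "V = lam * W" using Vq Wq by (simp add: algebra_simps)
  have Wpos: "0 < W" using Wq rpos by simp
  have nk: "2*n*k div (lam*alpha) = r * q"
    using q r assms(2) by (metis div_mult2_eq mult.commute nonzero_mult_div_cancel_left
        less_numeral_extra(3) mult.assoc)
  have tl: "t div lam = r" using r assms(2) by simp
  have HO: "heffter_order (lam*alpha) (t div lam) n k = W"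
    unfolding heffter_order_def using nk tl Wq by simp
  have dd: "V div t = q + 1" using Vq r rpos assms(2) by simp
  have dd': "W div (t div lam) = q + 1" using Wq tl rpos by simp
  have lad: "lam * alpha dvd 2*n*k"
  proof -
    have "2*n*k = alpha * (t*q)" using q ad by (metis dvd_mult_div_cancel)
    then have "2*n*k = (lam*alpha) * (r*q)" using r by simp
    then show ?thesis by (metis dvd_triv_left)
  qed
  have trd: "t div lam dvd 2*n*k div (lam*alpha)" using nk tl by simp
  define F where "F = {(i,j). i < m \<and> j < n \<and> A i j \<noteq> None}"
  have finF: "finite F"
    by (rule finite_subset[of _ "{..<m} \<times> {..<n}"]) (auto simp: F_def)
  have old1: "{(i, j). i < m \<and> j < n \<and> (\<exists>a. A i j = Some a \<and> g a mod z = y mod z)}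
      = {c\<in>F. g (the (A (fst c) (snd c))) mod z = y mod z}" for g :: "int \<Rightarrow> int" and z y
    unfolding F_def by auto
  have pmgen: "pm_count A m n z y = card {c\<in>F. the (A (fst c) (snd c)) mod z = y mod z}
      + card {c\<in>F. (- the (A (fst c) (snd c))) mod z = y mod z}" for z y
    unfolding pm_count_def using old1[of "\<lambda>a. a"] old1[of "\<lambda>a. - a"] by simp
  have new1: "{(i, j). i < m \<and> j < n \<and> (\<exists>b. A' i j = Some b \<and> b mod int W = y mod int W)}
      = {c\<in>F. the (A (fst c) (snd c)) mod int W = y mod int W}" for y
    unfolding F_def A'_def by auto
  have new2: "{(i, j). i < m \<and> j < n \<and> (\<exists>b. A' i j = Some b \<and> (- b) mod int W = y mod int W)}
      = {c\<in>F. (- the (A (fst c) (snd c))) mod int W = y mod int W}" for y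
    unfolding F_def A'_def by (auto simp: mod_minus_eq)
  have pmnew: "pm_count A' m n (int W) x = (if int (W div (t div lam)) dvd x then 0 else lam * alpha)"
    if x: "0 \<le> x" "x < int W" for x
  proof -
    let ?f = "\<lambda>c. the (A (fst c) (snd c))"
    have Vi: "int V = int lam * int W" using VW by simp
    have xm: "x mod int W = x" using x by simp
    have c1: "card {c\<in>F. ?f c mod int W = x} = (\<Sum>j<lam. card {c\<in>F. ?f c mod int V = x + int j * int W})"
      by (rule count_split[OF finF assms(2) _ Vi x]) (use Wpos in simp)
    have c2: "card {c\<in>F. (- ?f c) mod int W = x} = (\<Sum>j<lam. card {c\<in>F. (- ?f c) mod int V = x + int j * int W})"
      by (rule count_split[OF finF assms(2) _ Vi x]) (use Wpos in simp)
    have each: "pm_count A m n (int V) (x + int j * int W) = (if int (W div (t div lam)) dvd x then 0 else alpha)"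
      if j: "j < lam" for j
    proof -
      have lt: "x + int j * int W < int V"
      proof -
        have "x + int j * int W < int W + int j * int W" using x by simp
        also have "\<dots> = int (Suc j) * int W" by (simp add: algebra_simps)
        also have "\<dots> \<le> int lam * int W" using j Wpos by (intro mult_right_mono) auto
        finally show ?thesis using Vi by simp
      qed
      have dW: "int (q+1) dvd int W" using Wq by (metis dvd_triv_right of_nat_dvd_iff)
      have "int (q+1) dvd x + int j * int W \<longleftrightarrow> int (q+1) dvd x"
        using dW by (metis dvd_add_left_iff dvd_mult)
      then show ?thesis using pm[rule_format, of "x + int j * int W"] x lt dd dd' by simp
    qed
    have "pm_count A' m n (int W) x = card {c\<in>F. ?f c mod int W = x} + card {c\<in>F. (- ?f c) mod int W = x}"
      unfolding pm_count_def using new1[of x] new2[of x] xm by simp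
    also have "\<dots> = (\<Sum>j<lam. pm_count A m n (int V) (x + int j * int W))"
    proof -
      have "pm_count A m n (int V) (x + int j * int W) =
        card {c\<in>F. ?f c mod int V = x + int j * int W} + card {c\<in>F. (- ?f c) mod int V = x + int j * int W}"
        if "j < lam" for j
      proof -
        have "0 \<le> x + int j * int W" using x by simp
        moreover have "x + int j * int W < int V"
        proof -
          have "x + int j * int W < int W + int j * int W" using x by simp
          also have "\<dots> = int (Suc j) * int W" by (simp add: algebra_simps)
          also have "\<dots> \<le> int lam * int W" using that Wpos by (intro mult_right_mono) auto
          finally show ?thesis using Vi by simp
        qed
        ultimately have "(x + int j * int W) mod int V = x + int j * int W" by simp
        then show ?thesis using pmgen[of "int V" "x + int j * int W"] by simp
      qed
      then show ?thesis using c1 c2 by (simp add: sum.distrib)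
    qed
    also have "\<dots> = (\<Sum>j<lam. (if int (W div (t div lam)) dvd x then 0 else alpha))"
      using each by simp
    also have "\<dots> = (if int (W div (t div lam)) dvd x then 0 else lam * alpha)" by simp
    finally show ?thesis .
  qed
  have WdV: "int W dvd int V" using VW by simp
  have rowsum: "(\<Sum>j\<in>{j. j < n \<and> A' i j \<noteq> None}. the (A' i j)) mod int W = 0" if "i < m" for i
  proof -
    have "(\<Sum>j\<in>{j. j < n \<and> A' i j \<noteq> None}. the (A' i j)) = (\<Sum>j\<in>{j. j < n \<and> A i j \<noteq> None}. the (A i j) mod int W)"
      unfolding A'_def by (rule sum.cong) auto
    also have "\<dots> mod int W = (\<Sum>j\<in>{j. j < n \<and> A i j \<noteq> None}. the (A i j)) mod int W" by (rule mod_sum_eq)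
    also have "\<dots> = 0" using rs that WdV by (meson dvd_trans mod_0_imp_dvd dvd_imp_mod_0)
    finally show ?thesis .
  qed
  have colsum: "(\<Sum>i\<in>{i. i < m \<and> A' i j \<noteq> None}. the (A' i j)) mod int W = 0" if "j < n" for j
  proof -
    have "(\<Sum>i\<in>{i. i < m \<and> A' i j \<noteq> None}. the (A' i j)) = (\<Sum>i\<in>{i. i < m \<and> A i j \<noteq> None}. the (A i j) mod int W)"
      unfolding A'_def by (rule sum.cong) auto
    also have "\<dots> mod int W = (\<Sum>i\<in>{i. i < m \<and> A i j \<noteq> None}. the (A i j)) mod int W" by (rule mod_sum_eq)
    also have "\<dots> = 0" using cs that WdV by (meson dvd_trans mod_0_imp_dvd dvd_imp_mod_0)
    finally show ?thesis .
  qed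
  have "lambda_fold_heffter (lam * alpha) (t div lam) m n s k A'"
    unfolding lambda_fold_heffter_def Let_def HO
    using pos assms(2) lad trd rpos tl none Wpos rows cols pmnew rowsum colsum
    by (auto simp: A'_def)
  then show ?thesis unfolding A'_def W_def V_def .
qed

end
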